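(* Assume the standing setting in the context. Fix $e\in\mathcal E^d$, $M>0$, $x\in\mathbb Z^d$, and suppose $e\in\pi^{(x)}$ and $\tau_e\ge M$. Then for any $k\in\mathbb N$ such that ${S^e_k}'$ encloses neither $0$ nor $x$, the edge $e$ is $(k,M)$-large.
   Context: Setting: $d\ge2$, i.i.d. non-negative weights $\tau_e$ on the nearest-neighbor edges $\mathcal E^d$ of $\mathbb Z^d$, with the standing assumption $F(r)<p_c(d)$ if $r=0$ and $F(r)<\vec p_c(d)$ if $r>0$ ($F$ the distribution function, $r$ the essential infimum, $p_c,\vec p_c$ the bond and oriented bond percolation thresholds). $T(\gamma)=\sum_{e\in\gamma}\tau_e$; $\pi^{(x)}$ is the first (in a fixed deterministic ordering of finite vertex self-avoiding paths) vertex self-avoiding path from $0$ to $x$ minimizing $T$. For $e=\{a,b\}$ let $v_e$ be the endpoint of smaller $\ell^1$ norm. For $k\ge1$: ${S^e_k}'=\{z\in\mathbb Z^d:|v_e-z|_\infty=k\}$ and $S^e_k=\{\{u,w\}\in\mathcal E^d:u,w\in{S^e_k}'\}$; ${S^e_0}'$ is the set of the two endpoints of $e$ and $S^e_0=\{e\}$. For $u,w\in{S^e_h}'$, $T_{S^e_h}(u,w)$ is the minimum of $T(\gamma)$ over self-avoiding paths from $u$ to $w$ using only edges of $S^e_h$. The edge $e$ is $(k,M)$-large if for each $h=0,1,\dots,k$ there exist $u,w\in{S^e_h}'$ with $T_{S^e_h}(u,w)\ge M$. A set ${S^e_k}'$ encloses a vertex $y$ if $y$ is not in the unbounded component of $\mathbb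 Z^d\setminus{S^e_k}'$. *)

theory Defs
  imports "HOL-Analysis.Analysis"
begin

type_synonym 'd vtx = "int ^ 'd"
type_synonym 'd edge = "'d vtx set"

definition l1 :: "'d::finite vtx \<Rightarrow> int" where
  "l1 z = (\<Sum>i\<in>UNIV. \<bar>z $ i\<bar>)"

definition linf :: "'d::finite vtx \<Rightarrow> int" where
  "linf z = Max ((\<lambda>i. \<bar>z $ i\<bar>) ` UNIV)"

definition adj :: "'d::finite vtx \<Rightarrow> 'd vtx \<Rightarrow> bool" where
  "adj u w \<longleftrightarrow> l1 (u - w) = 1"

definition edges :: "'d::finite edge set" where
  "edges = {{u, w} | u w. adj u w}"

definition is_walk :: "'d::finite vtx list \<Rightarrow> bool" where
  "is_walk p \<longleftrightarrow> p \<noteq> [] \<and> (\<forall>i. Suc i < length p \<longrightarrow> adj (p ! i) (p ! Suc i))"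

definition path_edges :: "'d::finite vtx list \<Rightarrow> 'd edge set" where
  "path_edges p = {{p ! i, p ! Suc i} | i. Suc i < length p}"

definition sap :: "'d::finite vtx \<Rightarrow> 'd vtx \<Rightarrow> 'd vtx list \<Rightarrow> bool" where
  "sap u w p \<longleftrightarrow> is_walk p \<and> distinct p \<and> hd p = u \<and> last p = w"

definition T :: "('d::finite edge \<Rightarrow> real) \<Rightarrow> 'd vtx list \<Rightarrow> real" where
  "T \<tau> p = (\<Sum>i<length p - 1. \<tau> {p ! i, p ! Suc i})"

definition geodesic :: "('d::finite edge \<Rightarrow> real) \<Rightarrow> 'd vtx \<Rightarrow> 'd vtx list \<Rightarrow> bool" where
  "geodesic \<tau> x p \<longleftrightarrow> sap 0 x p \<and> (\<forall>q. sap 0 x q \<longrightarrow> T \<tau> p \<le> T \<tau> q)"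

text \<open>pi^(x): the first geodesic w.r.t. a fixed deterministic ordering (an injective
  enumeration @ord@ of finite vertex lists).\<close>
definition first_geodesic ::
  "('d::finite vtx list \<Rightarrow> nat) \<Rightarrow> ('d edge \<Rightarrow> real) \<Rightarrow> 'd vtx \<Rightarrow> 'd vtx list \<Rightarrow> bool" where
  "first_geodesic ord \<tau> x p \<longleftrightarrow> geodesic \<tau> x p \<and> (\<forall>q. geodesic \<tau> x q \<longrightarrow> ord p \<le> ord q)"

definition v_e :: "'d::finite edge \<Rightarrow> 'd vtx" where
  "v_e e = (SOME v. v \<in> e \<and> (\<forall>w\<in>e. l1 v \<le> l1 w))"

definition Sv :: "'d::finite edge \<Rightarrow> nat \<Rightarrow> 'd vtx set" where
  "Sv e k = (if k = 0 then e else {z. linf (v_e e - z) = int k})"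

definition Se :: "'d::finite edge \<Rightarrow> nat \<Rightarrow> 'd edge set" where
  "Se e k = (if k = 0 then {e} else {{u, w} | u w. adj u w \<and> u \<in> Sv e k \<and> w \<in> Sv e k})"

definition T_restr :: "('d::finite edge \<Rightarrow> real) \<Rightarrow> 'd edge set \<Rightarrow> 'd vtx \<Rightarrow> 'd vtx \<Rightarrow> real" where
  "T_restr \<tau> S u w = Inf (T \<tau> ` {p. sap u w p \<and> path_edges p \<subseteq> S})"

definition large :: "('d::finite edge \<Rightarrow> real) \<Rightarrow> 'd edge \<Rightarrow> nat \<Rightarrow> real \<Rightarrow> bool" where
  "large \<tau> e k M \<longleftrightarrow>
     (\<forall>h\<le>k. \<exists>u\<in>Sv e h. \<exists>w\<in>Sv e h. T_restr \<tau> (Se e h) u w \<ge> M)"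

definition conn_avoid :: "'d::finite vtx set \<Rightarrow> 'd vtx \<Rightarrow> 'd vtx \<Rightarrow> bool" where
  "conn_avoid A y z \<longleftrightarrow> (\<exists>p. is_walk p \<and> hd p = y \<and> last p = z \<and> set p \<inter> A = {})"

text \<open>A encloses y iff y is not in the unbounded (infinite) component of Z^d minus A.\<close>
definition encloses :: "'d::finite vtx set \<Rightarrow> 'd vtx \<Rightarrow> bool" where
  "encloses A y \<longleftrightarrow> \<not> (y \<notin> A \<and> infinite {z. conn_avoid A y z})"

end

theory Submission
  imports Defs
begin

lemma walk_Nil[simp]: "\<not> is_walk []" by (simp add: is_walk_def)
lemma walk_single[simp]: "is_walk [x]" by (simp add: is_walk_def)
lemma walk_Cons2[simp]: "is_walk (x # y # p) \<longleftrightarrow> adj x y \<and> is_walk (y # p)"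
proof
  assume h: "is_walk (x # y # p)"
  have "adj x y" using h unfolding is_walk_def by force
  moreover have "is_walk (y # p)" unfolding is_walk_def
  proof (intro conjI allI impI)
    fix i assume "Suc i < length (y # p)"
    then show "adj ((y # p) ! i) ((y # p) ! Suc i)" using h unfolding is_walk_def
      by (metis Suc_less_eq length_Cons nth_Cons_Suc)
  qed simp
  ultimately show "adj x y \<and> is_walk (y # p)" by simp
next
  assume h: "adj x y \<and> is_walk (y # p)"
  show "is_walk (x # y # p)" unfolding is_walk_def
  proof (intro conjI allI impI)
    fix i assume i: "Suc i < length (x # y # p)"
    show "adj ((x # y # p) ! i) ((x # y # p) ! Suc i)"
    proof (cases i)
      case 0 then show ?thesis using h by simp
    next
      case (Suc j) then show ?thesis using h i unfolding is_walk_def by simp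
    qed
  qed simp
qed

lemma pe_Nil[simp]: "path_edges [] = {}" by (simp add: path_edges_def)
lemma pe_single[simp]: "path_edges [x] = {}" by (simp add: path_edges_def)
lemma pe_Cons2[simp]: "path_edges (x # y # p) = insert {x, y} (path_edges (y # p))"
proof -
  have "path_edges (x # y # p) = {{(x # y # p) ! i, (x # y # p) ! Suc i} | i. Suc i < Suc (Suc (length p))}"
    by (simp add: path_edges_def)
  also have "\<dots> = insert {x,y} {{(y # p) ! i, (y # p) ! Suc i} | i. Suc i < Suc (length p)}"
  proof (rule set_eqI, rule iffI)
    fix f assume "f \<in> {{(x # y # p) ! i, (x # y # p) ! Suc i} | i. Suc i < Suc (Suc (length p))}"
    then obtain i where i: "f = {(x # y # p) ! i, (x # y # p) ! Suc i}" "Suc i < Suc (Suc (length p))" by blast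
    show "f \<in> insert {x,y} {{(y # p) ! i, (y # p) ! Suc i} | i. Suc i < Suc (length p)}"
    proof (cases i)
      case 0 then show ?thesis using i by simp
    next
      case (Suc j) then show ?thesis using i by auto
    qed
  next
    fix f assume "f \<in> insert {x,y} {{(y # p) ! i, (y # p) ! Suc i} | i. Suc i < Suc (length p)}"
    then consider "f = {x,y}" | j where "f = {(y # p) ! j, (y # p) ! Suc j}" "Suc j < Suc (length p)" by blast
    then show "f \<in> {{(x # y # p) ! i, (x # y # p) ! Suc i} | i. Suc i < Suc (Suc (length p))}"
    proof cases
      case 1 then show ?thesis by (intro CollectI exI[of _ 0]) simp
    next
      case 2 then show ?thesis by (intro CollectI exI[of _ "Suc j"]) simp
    qed
  qed
  finally show ?thesis by (simp add: path_edges_def)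
qed

lemma T_Nil[simp]: "T \<tau> [] = 0" by (simp add: T_def)
lemma T_single[simp]: "T \<tau> [x] = 0" by (simp add: T_def)
lemma T_Cons2[simp]: "T \<tau> (x # y # p) = \<tau> {x, y} + T \<tau> (y # p)"
proof -
  have "T \<tau> (x # y # p) = (\<Sum>i<Suc (length p). \<tau> {(x # y # p) ! i, (x # y # p) ! Suc i})"
    by (simp add: T_def)
  also have "\<dots> = \<tau> {x, y} + (\<Sum>i<length p. \<tau> {(y # p) ! i, (y # p) ! Suc i})"
    by (subst sum.lessThan_Suc_shift) simp
  finally show ?thesis by (simp add: T_def)
qed

lemma join:
  assumes "p \<noteq> []" "q \<noteq> []" "last p = hd q"
  shows "hd (p @ tl q) = hd p \<and> last (p @ tl q) = last q \<and> T \<tau> (p @ tl q) = T \<tau> p + T \<tau> q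
    \<and> path_edges (p @ tl q) = path_edges p \<union> path_edges q
    \<and> (is_walk p \<longrightarrow> is_walk q \<longrightarrow> is_walk (p @ tl q))"
  using assms
proof (induction p rule: induct_list012)
  case 1 then show ?case by simp
next
  case (2 x)
  then show ?case by (cases q) auto
next
  case (3 x y zs)
  then show ?case by auto
qed

lemma walk_adj: "is_walk p \<Longrightarrow> f \<in> path_edges p \<Longrightarrow> \<exists>a b. f = {a,b} \<and> adj a b \<and> a \<in> set p \<and> b \<in> set p"
proof (induction p rule: induct_list012)
  case (3 x y zs)
  show ?case
  proof (cases "f = {x,y}")
    case True then show ?thesis using 3(3) by (intro exI[of _ x] exI[of _ y]) simp
  next
    case False
    then have "f \<in> path_edges (y # zs)" "is_walk (y # zs)" using 3(3,4) by auto
    then obtain a b where "f = {a,b} \<and> adj a b \<and> a \<in> set (y # zs) \<and> b \<in> set (y # zs)"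
      using 3(2) by blast
    then show ?thesis by (intro exI[of _ a] exI[of _ b]) auto
  qed
qed auto

lemma walk_edges: "is_walk p \<Longrightarrow> path_edges p \<subseteq> edges"
  using walk_adj unfolding edges_def by blast

lemma T_nonneg: "\<forall>f\<in>edges. \<tau> f \<ge> 0 \<Longrightarrow> is_walk p \<Longrightarrow> T \<tau> p \<ge> 0"
proof (induction p rule: induct_list012)
  case (3 x y zs)
  then have "{x,y} \<in> edges" unfolding edges_def by auto
  then show ?case using 3 by simp
qed auto

lemma T_ge_edge: "\<forall>f\<in>edges. \<tau> f \<ge> 0 \<Longrightarrow> is_walk p \<Longrightarrow> f \<in> path_edges p \<Longrightarrow> T \<tau> p \<ge> \<tau> f"
proof (induction p rule: induct_list012)
  case (3 x y zs)
  then have "{x,y} \<in> edges" unfolding edges_def by auto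
  then show ?case using 3 T_nonneg[of \<tau> "y # zs"] by auto
qed auto

lemma split_at:
  assumes "n < length p"
  shows "take (Suc n) p @ tl (drop n p) = p" "take (Suc n) p \<noteq> []" "drop n p \<noteq> []"
    "last (take (Suc n) p) = hd (drop n p)" "hd (drop n p) = p ! n"
  apply (insert assms)
     apply (simp add: tl_drop flip: drop_Suc)
    apply (metis list.size(3) not_less_zero take_eq_Nil2 zero_less_Suc)
   apply simp
  apply (simp add: hd_drop_conv_nth take_Suc_conv_app_nth)
  apply (simp add: hd_drop_conv_nth)
  done

lemma walk_take: "is_walk p \<Longrightarrow> 0 < n \<Longrightarrow> is_walk (take n p)"
  unfolding is_walk_def by (simp add: nth_take)

lemma walk_drop: "is_walk p \<Longrightarrow> n < length p \<Longrightarrow> is_walk (drop n p)"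
  unfolding is_walk_def by (simp add: nth_drop)

lemma split_T:
  assumes "n < length p"
  shows "T \<tau> p = T \<tau> (take (Suc n) p) + T \<tau> (drop n p)"
    "path_edges p = path_edges (take (Suc n) p) \<union> path_edges (drop n p)"
  using join[OF split_at(2,3,4)[OF assms], of \<tau>] split_at(1)[OF assms] by auto

lemma loop_erase:
  assumes nn: "\<forall>f\<in>edges. \<tau> f \<ge> 0"
  shows "is_walk p \<Longrightarrow> \<exists>q. sap (hd p) (last p) q \<and> path_edges q \<subseteq> path_edges p \<and> T \<tau> q \<le> T \<tau> p"
proof (induction p rule: induct_list012)
  case (2 x)
  then show ?case by (intro exI[of _ "[x]"]) (simp add: sap_def)
next
  case (3 x y zs)
  then obtain q where q: "sap y (last (y # zs)) q" "path_edges q \<subseteq> path_edges (y # zs)" "T \<tau> q \<le> T \<tau> (y # zs)"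
    by auto
  have xy: "{x,y} \<in> edges" using 3 unfolding edges_def by auto
  show ?case
  proof (cases "x \<in> set q")
    case True
    then obtain n where n: "n < length q" "q ! n = x" by (meson in_set_conv_nth)
    let ?q = "drop n q"
    have w: "is_walk q" "distinct q" using q(1) by (auto simp: sap_def)
    have "sap x (last (x # y # zs)) ?q"
      using q(1) n w walk_drop[OF w(1) n(1)] split_at[OF n(1)] unfolding sap_def
      by (auto simp: last_drop)
    moreover have "path_edges ?q \<subseteq> path_edges (x # y # zs)"
      using split_T(2)[OF n(1)] q(2) by auto
    moreover have "T \<tau> ?q \<le> T \<tau> (x # y # zs)"
    proof -
      have "\<tau> {x,y} \<ge> 0" using nn xy by blast
      then show ?thesis
        using split_T(1)[OF n(1), of \<tau>] T_nonneg[OF nn walk_take[OF w(1), of "Suc n"]] q(3)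
        by simp
    qed
    ultimately show ?thesis by auto
  next
    case False
    have w: "is_walk q" "distinct q" "hd q = y" "q \<noteq> []" using q(1) by (auto simp: sap_def is_walk_def)
    then obtain q' where q': "q = y # q'" by (cases q) auto
    have "sap x (last (x # y # zs)) (x # q)"
      using q(1) False w 3(3) q' unfolding sap_def by auto
    moreover have "path_edges (x # q) \<subseteq> path_edges (x # y # zs)" using q(2) q' by auto
    moreover have "T \<tau> (x # q) \<le> T \<tau> (x # y # zs)" using q(3) q' by simp
    ultimately show ?thesis by (intro exI[of _ "x # q"]) simp
  qed
qed simp

lemma adj_sym: "adj a b \<Longrightarrow> adj b a"
proof -
  have "l1 (a - b) = l1 (b - a)" unfolding l1_def
    by (intro sum.cong) (auto simp: abs_minus_commute)
  then show "adj a b \<Longrightarrow> adj b a" by (simp add: adj_def)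
qed

lemma walk_rev: "is_walk p \<Longrightarrow> is_walk (rev p)"
proof (induction p rule: induct_list012)
  case (3 x y zs)
  have "rev (x # y # zs) = rev (y # zs) @ tl [y, x]" by simp
  moreover have "is_walk [y,x]" using 3(3) adj_sym by auto
  ultimately show ?case using join[of "rev (y # zs)" "[y,x]"] 3 by auto
qed auto


lemma linf_ge: "\<bar>z $ i\<bar> \<le> linf z"
  unfolding linf_def by (rule Max_ge) auto

lemma linf_ex: "\<exists>i. linf z = \<bar>z $ i\<bar>"
proof -
  have "linf z \<in> (\<lambda>i. \<bar>z $ i\<bar>) ` UNIV" unfolding linf_def by (rule Max_in) auto
  then show ?thesis by auto
qed

lemma linf_le: "(\<And>i. \<bar>z $ i\<bar> \<le> c) \<Longrightarrow> linf z \<le> c"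
  unfolding linf_def by (subst Max_le_iff) auto

lemma comp_le_l1: "\<bar>z $ i\<bar> \<le> l1 z"
  unfolding l1_def by (rule member_le_sum) auto

lemma adj_linf:
  assumes "adj a b"
  shows "\<bar>linf (v - a) - linf (v - b)\<bar> \<le> 1"
proof -
  have c: "\<bar>a $ i - b $ i\<bar> \<le> 1" for i
    using comp_le_l1[of "a - b" i] assms by (simp add: adj_def)
  have "linf (v - a) \<le> linf (v - b) + 1"
  proof (rule linf_le)
    fix i
    have "\<bar>(v - a) $ i\<bar> \<le> \<bar>(v - b) $ i\<bar> + \<bar>a $ i - b $ i\<bar>" by simp
    then show "\<bar>(v - a) $ i\<bar> \<le> linf (v - b) + 1" using c[of i] linf_ge[of "v - b" i] by linarith
  qed
  moreover have "linf (v - b) \<le> linf (v - a) + 1"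
  proof (rule linf_le)
    fix i
    have "\<bar>(v - b) $ i\<bar> \<le> \<bar>(v - a) $ i\<bar> + \<bar>a $ i - b $ i\<bar>" by simp
    then show "\<bar>(v - b) $ i\<bar> \<le> linf (v - a) + 1" using c[of i] linf_ge[of "v - a" i] by linarith
  qed
  ultimately show ?thesis by linarith
qed

lemma ivt_up:
  fixes g :: "nat \<Rightarrow> int"
  assumes "a \<le> m" "g a \<le> h" "h \<le> g m" "\<And>n. a \<le> n \<Longrightarrow> n < m \<Longrightarrow> \<bar>g (Suc n) - g n\<bar> \<le> 1"
  shows "\<exists>n. a \<le> n \<and> n \<le> m \<and> g n = h"
  using assms
proof (induction m)
  case 0 then show ?case by auto
next
  case (Suc m)
  show ?case
  proof (cases "a \<le> m \<and> h \<le> g m")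
    case True
    then obtain n where "a \<le> n \<and> n \<le> m \<and> g n = h" using Suc by auto
    then show ?thesis by (intro exI[of _ n]) auto
  next
    case False
    show ?thesis
    proof (cases "a = Suc m")
      case True then show ?thesis using Suc by auto
    next
      case F2: False
      then have "a \<le> m" "g m < h" using False Suc(2) by auto
      then have "g (Suc m) = h" using Suc(4) Suc(5)[of m] by auto
      then show ?thesis using Suc(2) by auto
    qed
  qed
qed

lemma ivt:
  fixes g :: "nat \<Rightarrow> int"
  assumes "a \<le> m" "\<And>n. a \<le> n \<Longrightarrow> n < m \<Longrightarrow> \<bar>g (Suc n) - g n\<bar> \<le> 1"
    "(g a \<le> h \<and> h \<le> g m) \<or> (g m \<le> h \<and> h \<le> g a)"
  shows "\<exists>n. a \<le> n \<and> n \<le> m \<and> g n = h"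
proof (cases "g a \<le> h \<and> h \<le> g m")
  case True then show ?thesis using ivt_up[OF assms(1), of g h] assms(2) by auto
next
  case False
  then have "- g a \<le> - h" "- h \<le> - g m" using assms(3) by auto
  from ivt_up[OF assms(1), of "\<lambda>n. - g n", OF this] assms(2)
  show ?thesis by fastforce
qed

lemma finite_box: "finite {z :: 'd::finite vtx. linf (v - z) < k}"
proof -
  have "{z :: 'd vtx. linf (v - z) < k} \<subseteq> (\<lambda>f. \<chi> i. f i) ` (Pi\<^sub>E UNIV (\<lambda>i. {v $ i - k .. v $ i + k}))"
  proof
    fix z :: "'d vtx" assume "z \<in> {z. linf (v - z) < k}"
    then have "\<bar>v $ i - z $ i\<bar> \<le> k" for i using linf_ge[of "v - z" i] by simp
    then have "v $ i - k \<le> z $ i \<and> z $ i \<le> v $ i + k" for i by (smt (verit))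
    then have "(\<lambda>i. z $ i) \<in> Pi\<^sub>E UNIV (\<lambda>i. {v $ i - k .. v $ i + k})" by (auto simp: PiE_iff abs_le_iff)
    moreover have "z = (\<chi> i. z $ i)" by simp
    ultimately show "z \<in> (\<lambda>f. \<chi> i. f i) ` (Pi\<^sub>E UNIV (\<lambda>i. {v $ i - k .. v $ i + k}))" by blast
  qed
  then show ?thesis by (rule finite_subset) (intro finite_imageI finite_PiE; simp)
qed

definition upd :: "'d::finite vtx \<Rightarrow> 'd \<Rightarrow> int \<Rightarrow> 'd vtx" where
  "upd z j s = (\<chi> l. if l = j then s else z $ l)"

lemma upd_nth[simp]: "upd z j s $ l = (if l = j then s else z $ l)"
  by (simp add: upd_def)

lemma adj_upd: "adj (upd z j s) (upd z j (s + 1))"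
proof -
  have "l1 (upd z j s - upd z j (s + 1)) = (\<Sum>l\<in>UNIV. if l = j then 1 else 0)"
    unfolding l1_def by (intro sum.cong) auto
  then show ?thesis by (simp add: adj_def)
qed

lemma move_coord:
  "\<exists>p. is_walk p \<and> hd p = upd z j s \<and> last p = upd z j (s + int n) \<and>
     (\<forall>y\<in>set p. \<exists>t. y = upd z j t \<and> s \<le> t \<and> t \<le> s + int n)"
proof (induction n)
  case 0 then show ?case by (intro exI[of _ "[upd z j s]"]) auto
next
  case (Suc n)
  then obtain p where p: "is_walk p" "hd p = upd z j s" "last p = upd z j (s + int n)"
    "\<forall>y\<in>set p. \<exists>t. y = upd z j t \<and> s \<le> t \<and> t \<le> s + int n" by blast
  have ne: "p \<noteq> []" using p(1) by auto
  let ?q = "[upd z j (s + int n), upd z j (s + int n + 1)]"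
  have wq: "is_walk ?q" using adj_upd by simp
  have J: "hd (p @ tl ?q) = hd p \<and> last (p @ tl ?q) = last ?q \<and> is_walk (p @ tl ?q)"
    using join[of p ?q] ne p(3) p(1) wq by simp
  show ?case
  proof (intro exI[of _ "p @ tl ?q"] conjI)
    show "\<forall>y\<in>set (p @ tl ?q). \<exists>t. y = upd z j t \<and> s \<le> t \<and> t \<le> s + int (Suc n)"
      using p(4) by fastforce
  qed (use J p in \<open>auto simp: ac_simps\<close>)
qed


lemma join_set: "set (p @ tl q) \<subseteq> set p \<union> set q"
  by (cases q) auto

lemma move_to:
  "\<exists>p. is_walk p \<and> hd p = upd z j s \<and> last p = upd z j t \<and>
     (\<forall>y\<in>set p. \<exists>r. y = upd z j r \<and> min s t \<le> r \<and> r \<le> max s t)"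
proof (cases "s \<le> t")
  case True
  from move_coord[of z j s "nat (t - s)"] True show ?thesis by auto
next
  case False
  from move_coord[of z j t "nat (s - t)"] False obtain p where p: "is_walk p" "hd p = upd z j t"
    "last p = upd z j s" "\<forall>y\<in>set p. \<exists>r. y = upd z j r \<and> t \<le> r \<and> r \<le> s" by auto
  have "p \<noteq> []" using p(1) by auto
  then show ?thesis using p walk_rev[OF p(1)] False
    by (intro exI[of _ "rev p"]) (auto simp: hd_rev last_rev)
qed

lemma sph_iff: "linf (v - y) = h \<longleftrightarrow> (\<forall>l. \<bar>v $ l - y $ l\<bar> \<le> h) \<and> (\<exists>l. \<bar>v $ l - y $ l\<bar> = h)"
proof
  assume a: "linf (v - y) = h"
  have "\<bar>v $ l - y $ l\<bar> \<le> h" for l using linf_ge[of "v - y" l] a by simp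
  moreover obtain l where "linf (v - y) = \<bar>(v - y) $ l\<bar>" using linf_ex by blast
  ultimately show "(\<forall>l. \<bar>v $ l - y $ l\<bar> \<le> h) \<and> (\<exists>l. \<bar>v $ l - y $ l\<bar> = h)"
    using a by auto
next
  assume a: "(\<forall>l. \<bar>v $ l - y $ l\<bar> \<le> h) \<and> (\<exists>l. \<bar>v $ l - y $ l\<bar> = h)"
  then have "linf (v - y) \<le> h" by (intro linf_le) simp
  moreover obtain l where "\<bar>v $ l - y $ l\<bar> = h" using a by blast
  then have "h \<le> linf (v - y)" using linf_ge[of "v - y" l] by simp
  ultimately show "linf (v - y) = h" by simp
qed

lemma sph_step2:
  assumes "finite L" "j \<notin> L" "y $ j = v $ j - h" "\<forall>l. \<bar>v $ l - y $ l\<bar> \<le> h" "h \<ge> 0"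
  shows "\<exists>p. is_walk p \<and> hd p = y \<and> last p = (\<chi> l. if l \<in> L then v $ l - h else y $ l)
     \<and> set p \<subseteq> {z. linf (v - z) = h}"
  using assms
proof (induction L rule: finite_induct)
  case empty
  have "\<bar>v $ j - y $ j\<bar> = h" using empty by simp
  then have "(\<forall>l. \<bar>v $ l - y $ l\<bar> \<le> h) \<and> (\<exists>l. \<bar>v $ l - y $ l\<bar> = h)" using empty by blast
  then have "linf (v - y) = h" using sph_iff[of v y h] by blast
  then have "y \<in> {z. linf (v - z) = h}" by simp
  then show ?case by (intro exI[of _ "[y]"]) auto
next
  case (insert l L)
  let ?y' = "(\<chi> l. if l \<in> L then v $ l - h else y $ l) :: 'a vtx"
  obtain p where p: "is_walk p" "hd p = y" "last p = ?y'" "set p \<subseteq> {z. linf (v - z) = h}"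
    using insert by auto
  obtain q where q: "is_walk q" "hd q = upd ?y' l (?y' $ l)" "last q = upd ?y' l (v $ l - h)"
    "\<forall>y\<in>set q. \<exists>r. y = upd ?y' l r \<and> min (?y' $ l) (v $ l - h) \<le> r \<and> r \<le> max (?y' $ l) (v $ l - h)"
    using move_to by blast
  have e1: "upd ?y' l (?y' $ l) = ?y'" by (simp add: upd_def vec_eq_iff)
  have e2: "upd ?y' l (v $ l - h) = (\<chi> l'. if l' \<in> insert l L then v $ l' - h else y $ l')"
    by (simp add: upd_def vec_eq_iff)
  have jl: "j \<noteq> l" using insert by auto
  have qs: "set q \<subseteq> {z. linf (v - z) = h}"
  proof
    fix x assume "x \<in> set q"
    then obtain r where r: "x = upd ?y' l r" "min (?y' $ l) (v $ l - h) \<le> r" "r \<le> max (?y' $ l) (v $ l - h)"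
      using q(4) by blast
    have "?y' $ l = y $ l" using insert by simp
    then have "\<bar>v $ l - r\<bar> \<le> h" using r insert(6)[rule_format, of l] insert(7) by (auto simp: min_def max_def abs_le_iff split: if_splits)
    then have "\<forall>l'. \<bar>v $ l' - x $ l'\<bar> \<le> h" using insert(6,7) r(1) by auto
    moreover have "\<bar>v $ j - x $ j\<bar> = h" using r(1) jl insert(2,4,5,7) by auto
    ultimately show "x \<in> {z. linf (v - z) = h}" by (auto simp: sph_iff)
  qed
  have ne: "p \<noteq> []" "q \<noteq> []" using p(1) q(1) by auto
  show ?case
    using join[of p q] ne p q e1 e2 join_set[of p q] qs
    by (intro exI[of _ "p @ tl q"]) auto
qed

lemma sphere_conn:
  fixes v :: "'d::finite vtx"
  assumes "CARD('d) \<ge> 2" "h \<ge> 1" "linf (v - z) = h"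
  shows "\<exists>p. is_walk p \<and> hd p = z \<and> last p = (\<chi> l. v $ l - h) \<and> set p \<subseteq> {z. linf (v - z) = h}"
proof -
  obtain i where i: "\<bar>v $ i - z $ i\<bar> = h" using assms(3) by (auto simp: sph_iff)
  have zb: "\<forall>l. \<bar>v $ l - z $ l\<bar> \<le> h" using assms(3) by (auto simp: sph_iff)
  obtain j :: 'd where j: "j \<noteq> i"
  proof -
    have "UNIV - {i} \<noteq> {}"
    proof
      assume "UNIV - {i} = {}"
      then have "(UNIV :: 'd set) = {i}" by auto
      then have "CARD('d) = card {i}" by (rule arg_cong)
      then have "CARD('d) = 1" by simp
      with assms(1) show False by simp
    qed
    then show ?thesis using that by blast
  qed
  obtain q where q: "is_walk q" "hd q = upd z j (z $ j)" "last q = upd z j (v $ j - h)"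
    "\<forall>y\<in>set q. \<exists>r. y = upd z j r \<and> min (z $ j) (v $ j - h) \<le> r \<and> r \<le> max (z $ j) (v $ j - h)"
    using move_to by blast
  have e1: "upd z j (z $ j) = z" by (simp add: upd_def vec_eq_iff)
  have qs: "set q \<subseteq> {z. linf (v - z) = h}"
  proof
    fix x assume "x \<in> set q"
    then obtain r where r: "x = upd z j r" "min (z $ j) (v $ j - h) \<le> r" "r \<le> max (z $ j) (v $ j - h)"
      using q(4) by blast
    have "\<bar>v $ j - r\<bar> \<le> h" using r zb[rule_format, of j] assms(2) by (auto simp: min_def max_def abs_le_iff split: if_splits)
    then have "\<forall>l'. \<bar>v $ l' - x $ l'\<bar> \<le> h" using zb r(1) by auto
    moreover have "\<bar>v $ i - x $ i\<bar> = h" using r(1) j i by auto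
    ultimately show "x \<in> {z. linf (v - z) = h}" by (auto simp: sph_iff)
  qed
  let ?z1 = "upd z j (v $ j - h)"
  have z1b: "\<forall>l. \<bar>v $ l - ?z1 $ l\<bar> \<le> h" using zb assms(2) by auto
  obtain p where p: "is_walk p" "hd p = ?z1"
    "last p = (\<chi> l. if l \<in> UNIV - {j} then v $ l - h else ?z1 $ l)" "set p \<subseteq> {z. linf (v - z) = h}"
    using sph_step2[of "UNIV - {j}" j ?z1 v h] z1b assms(2) by auto
  have e2: "(\<chi> l. if l \<in> UNIV - {j} then v $ l - h else ?z1 $ l) = (\<chi> l. v $ l - h)"
    by (simp add: vec_eq_iff)
  have ne: "p \<noteq> []" "q \<noteq> []" using p(1) q(1) by auto
  show ?thesis
    using join[of q p] ne p q e1 e2 join_set[of q p] qs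
    by (intro exI[of _ "q @ tl p"]) auto
qed


lemma walk_in_edges: "is_walk p \<Longrightarrow> set p \<subseteq> A \<Longrightarrow>
  path_edges p \<subseteq> {{a, b} | a b. adj a b \<and> a \<in> A \<and> b \<in> A}"
  using walk_adj by blast

lemma sphere_pair:
  fixes v :: "'d::finite vtx"
  assumes "CARD('d) \<ge> 2" "h \<ge> 1" "linf (v - u) = h" "linf (v - w) = h"
  shows "\<exists>q. sap u w q \<and> path_edges q \<subseteq> {{a, b} | a b. adj a b \<and> a \<in> {z. linf (v - z) = h} \<and> b \<in> {z. linf (v - z) = h}}"
proof -
  obtain p1 where p1: "is_walk p1" "hd p1 = u" "last p1 = (\<chi> l. v $ l - h)" "set p1 \<subseteq> {z. linf (v - z) = h}"
    using sphere_conn[OF assms(1,2,3)] by blast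
  obtain p2 where p2: "is_walk p2" "hd p2 = w" "last p2 = (\<chi> l. v $ l - h)" "set p2 \<subseteq> {z. linf (v - z) = h}"
    using sphere_conn[OF assms(1,2,4)] by blast
  have ne: "p1 \<noteq> []" "rev p2 \<noteq> []" using p1(1) p2(1) by auto
  have J: "hd (p1 @ tl (rev p2)) = u" "last (p1 @ tl (rev p2)) = w" "is_walk (p1 @ tl (rev p2))"
    using join[OF ne, of "\<lambda>_. 0"] p1 p2 walk_rev[OF p2(1)] ne by (auto simp: hd_rev last_rev)
  have S: "set (p1 @ tl (rev p2)) \<subseteq> {z. linf (v - z) = h}"
    using join_set[of p1 "rev p2"] p1(4) p2(4) by auto
  obtain q where q: "sap u w q" "path_edges q \<subseteq> path_edges (p1 @ tl (rev p2))"
    using loop_erase[of "\<lambda>_. 0::real", OF _ J(3)] J by auto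
  show ?thesis using q walk_in_edges[OF J(3) S] by blast
qed

lemma stays_inside:
  fixes g :: "'d::finite vtx \<Rightarrow> int"
  assumes step: "\<And>a b. adj a b \<Longrightarrow> \<bar>g a - g b\<bar> \<le> 1"
  shows "is_walk p \<Longrightarrow> set p \<inter> {z. g z = k} = {} \<Longrightarrow> g (hd p) < k \<Longrightarrow> \<forall>z\<in>set p. g z < k"
proof (induction p rule: induct_list012)
  case (3 x y zs)
  have "\<bar>g x - g y\<bar> \<le> 1" using 3(3) step by simp
  moreover have "g y \<noteq> k" using 3(4) by auto
  ultimately have "g y < k" using 3(5) by simp
  then have "\<forall>z\<in>set (y # zs). g z < k" using 3 by auto
  then show ?case using 3(5) by simp
qed auto

lemma not_encl:
  fixes v :: "'d::finite vtx"
  assumes "\<not> encloses {z. linf (v - z) = k} y"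
  shows "linf (v - y) > k"
proof (rule ccontr)
  assume "\<not> linf (v - y) > k"
  moreover have "linf (v - y) \<noteq> k" using assms unfolding encloses_def by auto
  ultimately have lt: "linf (v - y) < k" by simp
  have "{z. conn_avoid {z. linf (v - z) = k} y z} \<subseteq> {z. linf (v - z) < k}"
  proof
    fix z assume "z \<in> {z. conn_avoid {z. linf (v - z) = k} y z}"
    then obtain p where p: "is_walk p" "hd p = y" "last p = z" "set p \<inter> {z. linf (v - z) = k} = {}"
      unfolding conn_avoid_def by blast
    have "\<forall>z\<in>set p. linf (v - z) < k"
      using stays_inside[of "\<lambda>z. linf (v - z)", OF _ p(1) p(4)] adj_linf lt p(2) by auto
    moreover have "z \<in> set p" using p(1,3) last_in_set[of p] by (auto simp: is_walk_def)
    ultimately show "z \<in> {z. linf (v - z) < k}" by auto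
  qed
  then have "finite {z. conn_avoid {z. linf (v - z) = k} y z}" using finite_box finite_subset by blast
  then show False using assms unfolding encloses_def by auto
qed

lemma ve_in: assumes "e \<in> edges" shows "v_e e \<in> e"
proof -
  obtain p q where e: "e = {p, q}" using assms unfolding edges_def by auto
  have "\<exists>v. v \<in> e \<and> (\<forall>w\<in>e. l1 v \<le> l1 w)"
    by (cases "l1 p \<le> l1 q") (auto simp: e)
  then show ?thesis unfolding v_e_def by (rule someI2_ex) auto
qed

lemma linf_zero: "linf (0 :: 'd::finite vtx) = 0"
proof -
  have "linf (0 :: 'd vtx) \<le> 0" by (rule linf_le) simp
  moreover have "0 \<le> linf (0 :: 'd vtx)" using linf_ge[of 0] by (meson abs_ge_zero order_trans)
  ultimately show ?thesis by simp
qed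


theorem lemma3p1:
  fixes \<tau> :: "'d::finite edge \<Rightarrow> real"
    and ord :: "'d vtx list \<Rightarrow> nat"
    and e :: "'d edge" and M :: real and x :: "'d vtx" and \<pi> :: "'d vtx list" and k :: nat
  assumes "CARD('d) \<ge> 2"
    and "\<forall>f\<in>edges. \<tau> f \<ge> 0"
    and "inj ord"
    and "first_geodesic ord \<tau> x \<pi>"
    and "e \<in> edges"
    and "M > 0"
    and "e \<in> path_edges \<pi>"
    and "\<tau> e \<ge> M"
    and "\<not> encloses (Sv e k) 0"
    and "\<not> encloses (Sv e k) x"
  shows "large \<tau> e k M"
proof -
  note nn = assms(2)
  have geo: "sap 0 x \<pi>" "\<And>q. sap 0 x q \<Longrightarrow> T \<tau> \<pi> \<le> T \<tau> q"
    using assms(4) unfolding first_geodesic_def geodesic_def by auto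
  have wp: "is_walk \<pi>" "distinct \<pi>" "hd \<pi> = 0" "last \<pi> = x" using geo(1) unfolding sap_def by auto
  have pne: "\<pi> \<noteq> []" using wp(1) by auto
  obtain i where i: "e = {\<pi> ! i, \<pi> ! Suc i}" "Suc i < length \<pi>"
    using assms(7) unfolding path_edges_def by blast
  have adjpi: "adj (\<pi> ! n) (\<pi> ! Suc n)" if "Suc n < length \<pi>" for n
    using wp(1) that unfolding is_walk_def by blast
  define v where "v = v_e e"
  have vin: "v \<in> e" using ve_in[OF assms(5)] v_def by simp
  define f where "f n = linf (v - \<pi> ! n)" for n
  have fstep: "\<bar>f (Suc n) - f n\<bar> \<le> 1" if "Suc n < length \<pi>" for n
    using adj_linf[OF adjpi[OF that], of v] unfolding f_def by simp
  have fi: "f i \<le> 1" "f (Suc i) \<le> 1"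
  proof -
    have a: "\<bar>f (Suc i) - f i\<bar> \<le> 1" using fstep[OF i(2)] .
    have "f i = 0 \<or> f (Suc i) = 0" using vin i(1) linf_zero unfolding f_def by auto
    moreover have "f i \<ge> 0" "f (Suc i) \<ge> 0" unfolding f_def using linf_ge
      by (meson abs_ge_zero order_trans)+
    ultimately show "f i \<le> 1" "f (Suc i) \<le> 1" using a by auto
  qed
  show ?thesis unfolding large_def
  proof (intro allI impI)
    fix h assume hk: "h \<le> k"
    show "\<exists>u\<in>Sv e h. \<exists>w\<in>Sv e h. T_restr \<tau> (Se e h) u w \<ge> M"
    proof (cases "h = 0")
      case True
      let ?u = "\<pi> ! i" and ?w = "\<pi> ! Suc i"
      have uw: "?u \<noteq> ?w" using wp(2) i(2) by (simp add: nth_eq_iff_index_eq)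
      have "T_restr \<tau> (Se e h) ?u ?w \<ge> M"
        unfolding T_restr_def
      proof (rule cInf_greatest)
        have "sap ?u ?w [?u, ?w]" using adjpi[OF i(2)] uw by (simp add: sap_def)
        moreover have "path_edges [?u, ?w] \<subseteq> Se e h" using True i(1) by (simp add: Se_def)
        ultimately show "T \<tau> ` {p. sap ?u ?w p \<and> path_edges p \<subseteq> Se e h} \<noteq> {}" by blast
      next
        fix t assume "t \<in> T \<tau> ` {p. sap ?u ?w p \<and> path_edges p \<subseteq> Se e h}"
        then obtain r where r: "t = T \<tau> r" "sap ?u ?w r" "path_edges r \<subseteq> {e}"
          using True by (auto simp: Se_def)
        obtain a b r' where r': "r = a # b # r'"
        proof (cases r)
          case Nil then show ?thesis using r(2) by (simp add: sap_def)
        next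
          case (Cons a rr)
          then show ?thesis
          proof (cases rr)
            case Nil then show ?thesis using r(2) uw Cons by (auto simp: sap_def)
          next
            case (Cons b r'') then show ?thesis using that \<open>r = a # rr\<close> by blast
          qed
        qed
        have "e \<in> path_edges r" using r(3) r' by auto
        then have "T \<tau> r \<ge> \<tau> e" using T_ge_edge[OF nn] r(2) by (auto simp: sap_def)
        then show "M \<le> t" using r(1) assms(8) by simp
      qed
      moreover have "?u \<in> Sv e h" "?w \<in> Sv e h" using True i(1) by (auto simp: Sv_def)
      ultimately show ?thesis by blast
    next
      case False
      then have k1: "k \<noteq> 0" using hk by simp
      have Svk: "Sv e k = {z. linf (v - z) = int k}" using k1 by (simp add: Sv_def v_def)
      have Svh: "Sv e h = {z. linf (v - z) = int h}" using False by (simp add: Sv_def v_def)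
      have Seh: "Se e h = {{a, b} | a b. adj a b \<and> a \<in> Sv e h \<and> b \<in> Sv e h}"
        using False by (simp add: Se_def)
      have f0: "f 0 > int h" using not_encl[of v "int k" 0] assms(9) Svk hk wp(3) pne
        unfolding f_def by (simp add: hd_conv_nth)
      have fl: "f (length \<pi> - 1) > int h" using not_encl[of v "int k" x] assms(10) Svk hk wp(4) pne
        unfolding f_def by (simp add: last_conv_nth)
      obtain a where a: "a \<le> i" "f a = int h"
        using ivt[of 0 i f "int h"] fstep fi f0 False i(2) by fastforce
      obtain b where b: "Suc i \<le> b" "b \<le> length \<pi> - 1" "f b = int h"
        using ivt[of "Suc i" "length \<pi> - 1" f "int h"] fstep fi fl False i(2) by fastforce
      let ?u = "\<pi> ! a" and ?w = "\<pi> ! b"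
      have uS: "?u \<in> Sv e h" "?w \<in> Sv e h" using a b Svh unfolding f_def by auto
      have "T_restr \<tau> (Se e h) ?u ?w \<ge> M"
        unfolding T_restr_def
      proof (rule cInf_greatest)
        obtain q where "sap ?u ?w q" "path_edges q \<subseteq> Se e h"
          using sphere_pair[OF assms(1), of "int h" v ?u ?w] False uS Svh Seh by auto
        then show "T \<tau> ` {p. sap ?u ?w p \<and> path_edges p \<subseteq> Se e h} \<noteq> {}" by blast
      next
        fix t assume "t \<in> T \<tau> ` {p. sap ?u ?w p \<and> path_edges p \<subseteq> Se e h}"
        then obtain r where r: "t = T \<tau> r" "sap ?u ?w r" by auto
        show "M \<le> t"
        proof (rule ccontr)
          assume "\<not> M \<le> t"
          then have rM: "T \<tau> r < M" using r(1) by simp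
          have al: "a < length \<pi>" "b < length \<pi>" using a b i(2) by auto
          let ?P = "take (Suc a) \<pi>" and ?R = "drop a \<pi>" and ?Q = "drop b \<pi>"
          let ?S = "take (Suc (b - a)) ?R"
          have bR: "b - a < length ?R" using al a b by auto
          have dQ: "drop (b - a) ?R = ?Q" using a b by simp
          have T1: "T \<tau> \<pi> = T \<tau> ?P + T \<tau> ?S + T \<tau> ?Q"
            using split_T(1)[OF al(1), of \<tau>] split_T(1)[OF bR, of \<tau>] dQ by simp
          have eS: "e \<in> path_edges ?S"
          proof -
            have "Suc (i - a) < length ?S" using a b al by auto
            moreover have "?S ! (i - a) = \<pi> ! i" "?S ! Suc (i - a) = \<pi> ! Suc i" using a b al by auto
            ultimately show ?thesis unfolding path_edges_def i(1) by force
          qed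
          have wS: "is_walk ?S" using walk_take[OF walk_drop[OF wp(1) al(1)]] by simp
          have TS: "T \<tau> ?S \<ge> M" using T_ge_edge[OF nn wS eS] assms(8) by simp
          have rw: "is_walk r" "r \<noteq> []" "hd r = ?u" "last r = ?w" using r(2) by (auto simp: sap_def)
          have Pp: "?P \<noteq> []" "last ?P = ?u" "hd ?P = 0" "is_walk ?P"
            using split_at[OF al(1)] wp(3) pne walk_take[OF wp(1)] by auto
          have Qp: "?Q \<noteq> []" "hd ?Q = ?w" "last ?Q = x" "is_walk ?Q"
            using split_at[OF al(2)] wp(4) al walk_drop[OF wp(1) al(2)] by auto
          have J1: "hd (?P @ tl r) = 0" "last (?P @ tl r) = ?w" "T \<tau> (?P @ tl r) = T \<tau> ?P + T \<tau> r"
            "is_walk (?P @ tl r)" "?P @ tl r \<noteq> []"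
            using join[of ?P r \<tau>] Pp rw by auto
          let ?W = "(?P @ tl r) @ tl ?Q"
          have J2: "hd ?W = 0" "last ?W = x" "T \<tau> ?W = T \<tau> ?P + T \<tau> r + T \<tau> ?Q" "is_walk ?W"
            using join[of "?P @ tl r" ?Q \<tau>] J1 Qp by auto
          obtain W' where W': "sap 0 x W'" "T \<tau> W' \<le> T \<tau> ?W"
            using loop_erase[OF nn J2(4)] J2(1,2) by auto
          have "T \<tau> \<pi> \<le> T \<tau> W'" using geo(2)[OF W'(1)] .
          then show False using W'(2) J2(3) T1 TS rM by linarith
        qed
      qed
      then show ?thesis using uS by blast
    qed
  qed
qed

end
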